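(* Consider transport, under an invertible area-preserving map $P$ of a two-dimensional surface $\Sigma$, between two regions $R_0$ and $R_1$ separated by a homoclinic or heteroclinic tangle, with lobes $L_{i,j}(n)$ as described in the context, and assume $L_{0,1}(0)\cap L_{1,0}(0)=\emptyset$. Let $i\in\{0,1\}$, $j=1-i$, and let integers $k_1<k_3$ be such that $L_{i,j}(k_1)\cap L_{i,j}(k_3)\neq\emptyset$. Then $$L_{i,j}(k_1)\cap L_{i,j}(k_3)=\bigcup_{k_2=k_1+1}^{k_3-1} L_{i,j}(k_1)\cap L_{j,i}(k_2)\cap L_{i,j}(k_3).$$
   Context: $\Sigma$ is a two-dimensional surface with an area measure $\mu$ and $P:\Sigma\to\Sigma$ an invertible $\mu$-preserving map. $R_0$ and $R_1$ are two regions of $\Sigma$ whose common boundary is formed by segments of stable and unstable manifolds of hyperbolic fixed points of $P$ joined at primary intersection points (a homoclinic or heteroclinic tangle). For $i\in\{0,1\}$, $j=1-i$, $L_{i,j}(n)$ ($n\in\mathbb{Z}$) denotes the lobe of points that leave $R_i$ for $R_j$ immediately after $n$ iterations of $P$: $L_{i,j}(1)\subset R_i$, $L_{i,j}(0)=P\,L_{i,j}(1)\subset R_j$, and $P^kL_{i,j}(n)=L_{i,j}(n-k)$ for all $k,n\in\mathbb{Z}$. Transport between the regions occurs only through these lobes (turnstile): a point $x$ with $P^{m-1}x\in R_i$ and $P^{m}x\in R_j$ lies in $L_{i,j}(m)$. *)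

theory Defs
  imports "HOL-Analysis.Analysis"
begin

definition iter :: "('a \<Rightarrow> 'a) \<Rightarrow> int \<Rightarrow> 'a \<Rightarrow> 'a" where
  "iter P k = (if 0 \<le> k then P ^^ nat k else (inv P) ^^ nat (- k))"

definition area_preserving_bij :: "'a measure \<Rightarrow> ('a \<Rightarrow> 'a) \<Rightarrow> bool" where
  "area_preserving_bij mu P \<longleftrightarrow>
     space mu = UNIV \<and> bij P \<and> P \<in> mu \<rightarrow>\<^sub>M mu \<and> inv P \<in> mu \<rightarrow>\<^sub>M mu \<and>
     (\<forall>A \<in> sets mu. emeasure mu (P -` A) = emeasure mu A)"

definition turnstile_lobes ::
  "('a \<Rightarrow> 'a) \<Rightarrow> (nat \<Rightarrow> 'a set) \<Rightarrow> (nat \<Rightarrow> nat \<Rightarrow> int \<Rightarrow> 'a set) \<Rightarrow> bool" where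
  "turnstile_lobes P R L \<longleftrightarrow>
     R 0 \<union> R 1 = UNIV \<and> R 0 \<inter> R 1 = {} \<and>
     (\<forall>i \<in> {0,1}. let j = 1 - i in
        L i j 1 \<subseteq> R i \<and> L i j 0 = P ` L i j 1 \<and> L i j 0 \<subseteq> R j \<and>
        (\<forall>k n. iter P k ` L i j n = L i j (n - k)) \<and>
        (\<forall>x m. iter P (m - 1) x \<in> R i \<and> iter P m x \<in> R j \<longrightarrow> x \<in> L i j m))"

end

theory Submission
  imports Defs
begin

lemma disc_cross_nat:
  fixes f :: "int \<Rightarrow> bool"
  shows "\<not> f a \<Longrightarrow> f (a + 1 + int n) \<Longrightarrow> \<exists>m. a < m \<and> m \<le> a + 1 + int n \<and> f m \<and> \<not> f (m - 1)"
proof (induction n)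
  case 0
  then show ?case by (intro exI[of _ "a+1"]) auto
next
  case (Suc n)
  show ?case
  proof (cases "f (a + 1 + int n)")
    case True
    then obtain m where "a < m \<and> m \<le> a + 1 + int n \<and> f m \<and> \<not> f (m - 1)"
      using Suc by blast
    then show ?thesis by (intro exI[of _ m]) auto
  next
    case False
    have "a + 1 + int (Suc n) - 1 = a + 1 + int n" by simp
    then have "\<not> f (a + 1 + int (Suc n) - 1)" using False by (simp add: ac_simps)
    then show ?thesis using Suc.prems
      by (intro exI[of _ "a + 1 + int (Suc n)"]) simp
  qed
qed

lemma disc_cross:
  fixes f :: "int \<Rightarrow> bool"
  assumes "\<not> f a" "f b" "a < b"
  shows "\<exists>m. a < m \<and> m \<le> b \<and> f m \<and> \<not> f (m - 1)"
proof -
  have "b = a + 1 + int (nat (b - a - 1))" using assms(3) by simp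
  then show ?thesis using disc_cross_nat[of f a "nat (b - a - 1)"] assms by metis
qed

theorem lemma3:
  fixes mu :: "'a measure" and P :: "'a \<Rightarrow> 'a"
    and R :: "nat \<Rightarrow> 'a set" and L :: "nat \<Rightarrow> nat \<Rightarrow> int \<Rightarrow> 'a set"
    and i j :: nat and k1 k3 :: int
  assumes "area_preserving_bij mu P"
    and "turnstile_lobes P R L"
    and "L 0 1 0 \<inter> L 1 0 0 = {}"
    and "i \<in> {0, 1}" and "j = 1 - i"
    and "k1 < k3"
    and "L i j k1 \<inter> L i j k3 \<noteq> {}"
  shows "L i j k1 \<inter> L i j k3 =
           (\<Union>k2 \<in> {k1<..<k3}. L i j k1 \<inter> L j i k2 \<inter> L i j k3)"
proof
  show "(\<Union>k2 \<in> {k1<..<k3}. L i j k1 \<inter> L j i k2 \<inter> L i j k3) \<subseteq> L i j k1 \<inter> L i j k3" by blast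
next
  have T: "R 0 \<union> R 1 = UNIV" "R 0 \<inter> R 1 = {}" using assms(2) unfolding turnstile_lobes_def by auto
  have ji: "j \<in> {0,1}" "1 - j = i" using assms(4,5) by auto
  have Tall: "\<forall>i \<in> {0,1}. let j = 1 - i in
        L i j 1 \<subseteq> R i \<and> L i j 0 = P ` L i j 1 \<and> L i j 0 \<subseteq> R j \<and>
        (\<forall>k n. iter P k ` L i j n = L i j (n - k)) \<and>
        (\<forall>x m. iter P (m - 1) x \<in> R i \<and> iter P m x \<in> R j \<longrightarrow> x \<in> L i j m)"
    using assms(2) unfolding turnstile_lobes_def by blast
  have Ti: "L i j 1 \<subseteq> R i" "L i j 0 \<subseteq> R j" "\<forall>k n. iter P k ` L i j n = L i j (n - k)"
    using bspec[OF Tall assms(4)] assms(5) unfolding Let_def by auto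
  have Tj: "\<forall>x m. iter P (m - 1) x \<in> R j \<and> iter P m x \<in> R i \<longrightarrow> x \<in> L j i m"
    using bspec[OF Tall ji(1)] ji(2) unfolding Let_def by auto
  have disj: "\<And>y. y \<in> R i \<Longrightarrow> y \<notin> R j" and cov: "\<And>y. y \<notin> R i \<Longrightarrow> y \<in> R j"
    using T assms(4,5) by auto
  show "L i j k1 \<inter> L i j k3 \<subseteq> (\<Union>k2 \<in> {k1<..<k3}. L i j k1 \<inter> L j i k2 \<inter> L i j k3)"
  proof
    fix x assume x: "x \<in> L i j k1 \<inter> L i j k3"
    have a: "iter P k1 x \<in> R j"
    proof -
      have "iter P k1 x \<in> L i j (k1 - k1)" using x Ti(3) by blast
      then show ?thesis using Ti(2) by auto
    qed
    have b: "iter P (k3 - 1) x \<in> R i"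
    proof -
      have "iter P (k3 - 1) x \<in> L i j (k3 - (k3 - 1))" using x Ti(3) by blast
      then show ?thesis using Ti(1) by auto
    qed
    have "k1 < k3 - 1"
    proof (rule ccontr)
      assume "\<not> k1 < k3 - 1"
      then have "k3 - 1 = k1" using assms(6) by simp
      then show False using a b disj by metis
    qed
    then obtain m where m: "k1 < m" "m \<le> k3 - 1" "iter P m x \<in> R i" "iter P (m - 1) x \<notin> R i"
      using disc_cross[of "\<lambda>m. iter P m x \<in> R i" k1 "k3 - 1"] a b disj by blast
    then have "x \<in> L j i m" using Tj cov by blast
    then show "x \<in> (\<Union>k2 \<in> {k1<..<k3}. L i j k1 \<inter> L j i k2 \<inter> L i j k3)"
      using m x by auto
  qed
qed

end
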